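(* Let $p$ be a prime, $n$ a non-negative integer and $A_*$ a graded commutative $\mathbb F_p$-algebra. The subset $G_{p,n}(A_* )$ of $G_p(A_* )$ consisting of the elements $\alpha(X)=\sum_{i\ge0}\alpha_iX^{p^i}$ with $\alpha_i^{p^{n-i+1}}=0$ for $i=1,2,\dots,n$ and $\alpha_i=0$ for $i\ge n+1$ is a subgroup of $G_p(A_* )$.
   Context: Graded commutative means $ab=(-1)^{\deg a\deg b}ba$. If $p=2$, $G_2(A_* )$ is the set of power series $\alpha(X)=\sum_{i\ge0}\alpha_iX^{2^i}\in A_*[[X]]$ ($X$ of degree $-1$) with $\alpha_i\in A_{2^i-1}$ and $\alpha_0=1$. If $p$ is odd, let $\epsilon$ have degree $-1$ with $\epsilon^2=0$, $X$ degree $-2$, and $G_p(A_* )$ is the set of $\alpha(X)=\sum_{i\ge0}\alpha_iX^{p^i}\in (A_*\otimes_{\mathbb F_p}\mathbb F_p[\epsilon]/(\epsilon^2))[[X]]$ with $\alpha_i$ homogeneous of degree $2(p^i-1)$ and $\alpha_0-1\in(\epsilon)$. The group law is $\alpha(X)\cdot\beta(X)=\beta(\alpha(X))$, i.e. the coefficient of $X^{p^i}$ in $\alpha\cdot\beta$ is $\sum_{j=0}^i\alpha_{i-j}^{p^j}\beta_j$. *)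

theory Defs
  imports "HOL-Algebra.Group" "HOL-Library.Product_Plus" "HOL-Computational_Algebra.Primes"
begin

text \<open>A graded algebra is modelled as an (associative, unital, not necessarily
commutative) ring of type 'a together with its homogeneous components
A k (k an integer degree).  The ring is the direct sum of the A k.\<close>

definition is_decomp :: "(int \<Rightarrow> 'a::ring_1 set) \<Rightarrow> 'a \<Rightarrow> (int \<Rightarrow> 'a) \<Rightarrow> bool" where
  "is_decomp A x c \<longleftrightarrow>
     finite {k. c k \<noteq> 0} \<and> (\<forall>k. c k \<in> A k) \<and> x = sum c {k. c k \<noteq> 0}"

definition graded_comm_algebra_Fp :: "nat \<Rightarrow> (int \<Rightarrow> 'a::ring_1 set) \<Rightarrow> bool" where
  "graded_comm_algebra_Fp p A \<longleftrightarrow>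
     (\<forall>k. 0 \<in> A k \<and> (\<forall>x\<in>A k. \<forall>y\<in>A k. x + y \<in> A k) \<and> (\<forall>x\<in>A k. - x \<in> A k)) \<and>
     1 \<in> A 0 \<and>
     (\<forall>i j. \<forall>x\<in>A i. \<forall>y\<in>A j. x * y \<in> A (i + j)) \<and>
     (\<forall>x. \<exists>!c. is_decomp A x c) \<and>
     (\<forall>i j. \<forall>x\<in>A i. \<forall>y\<in>A j. x * y = (-1) ^ nat \<bar>i * j\<bar> * (y * x)) \<and>
     of_nat p = (0::'a)"

definition comp :: "(int \<Rightarrow> 'a::ring_1 set) \<Rightarrow> int \<Rightarrow> 'a \<Rightarrow> 'a" where
  "comp A k x = (THE c. is_decomp A x c) k"

definition ginv :: "(int \<Rightarrow> 'a::ring_1 set) \<Rightarrow> 'a \<Rightarrow> 'a" where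
  "ginv A x = (\<Sum>k\<in>{k. comp A k x \<noteq> 0}. (-1) ^ nat \<bar>k\<bar> * comp A k x)"

section \<open>The graded tensor product A_* \<otimes> F_p[\<epsilon>]/(\<epsilon>^2), deg \<epsilon> = -1\<close>

text \<open>A pair (a, b) represents a + b\<epsilon>.  Koszul sign rule:
 \<epsilon> c = (-1)^(deg c) c \<epsilon>, hence (a + b\<epsilon>)(c + d\<epsilon>) = ac + (ad + b ginv(c))\<epsilon>.\<close>

definition emul :: "(int \<Rightarrow> 'a::ring_1 set) \<Rightarrow> 'a \<times> 'a \<Rightarrow> 'a \<times> 'a \<Rightarrow> 'a \<times> 'a" where
  "emul A x y = (fst x * fst y, fst x * snd y + snd x * ginv A (fst y))"

fun epow :: "(int \<Rightarrow> 'a::ring_1 set) \<Rightarrow> 'a \<times> 'a \<Rightarrow> nat \<Rightarrow> 'a \<times> 'a" where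
  "epow A x 0 = (1, 0)"
| "epow A x (Suc m) = emul A (epow A x m) x"

text \<open>An element sum_i alpha_i X^(p^i) is represented by its coefficient
sequence i \<mapsto> alpha_i.  Product: (alpha\<cdot>beta)_i = sum_(j=0..i) alpha_(i-j)^(p^j) beta_j.\<close>

definition G2 :: "(int \<Rightarrow> 'a::ring_1 set) \<Rightarrow> (nat \<Rightarrow> 'a) monoid" where
  "G2 A = \<lparr> partial_object.carrier = {\<alpha>. (\<forall>i. \<alpha> i \<in> A (2 ^ i - 1)) \<and> \<alpha> 0 = 1},
            monoid.mult = (\<lambda>\<alpha> \<beta> i. \<Sum>j\<le>i. \<alpha> (i - j) ^ (2 ^ j) * \<beta> j),
            monoid.one = (\<lambda>i. if i = 0 then 1 else 0) \<rparr>"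

definition G2n :: "nat \<Rightarrow> (int \<Rightarrow> 'a::ring_1 set) \<Rightarrow> (nat \<Rightarrow> 'a) set" where
  "G2n n A = {\<alpha> \<in> carrier (G2 A).
      (\<forall>i\<in>{1..n}. \<alpha> i ^ (2 ^ (n - i + 1)) = 0) \<and> (\<forall>i\<ge>n + 1. \<alpha> i = 0)}"

definition Godd :: "nat \<Rightarrow> (int \<Rightarrow> 'a::ring_1 set) \<Rightarrow> (nat \<Rightarrow> 'a \<times> 'a) monoid" where
  "Godd p A = \<lparr> partial_object.carrier = {\<alpha>.
              (\<forall>i. fst (\<alpha> i) \<in> A (2 * (int (p ^ i) - 1))
                 \<and> snd (\<alpha> i) \<in> A (2 * (int (p ^ i) - 1) + 1))
              \<and> fst (\<alpha> 0) = 1},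
            monoid.mult = (\<lambda>\<alpha> \<beta> i. \<Sum>j\<le>i. emul A (epow A (\<alpha> (i - j)) (p ^ j)) (\<beta> j)),
            monoid.one = (\<lambda>i. if i = 0 then (1, 0) else (0, 0)) \<rparr>"

definition Goddn :: "nat \<Rightarrow> nat \<Rightarrow> (int \<Rightarrow> 'a::ring_1 set) \<Rightarrow> (nat \<Rightarrow> 'a \<times> 'a) set" where
  "Goddn p n A = {\<alpha> \<in> carrier (Godd p A).
      (\<forall>i\<in>{1..n}. epow A (\<alpha> i) (p ^ (n - i + 1)) = (0, 0)) \<and> (\<forall>i\<ge>n + 1. \<alpha> i = (0, 0))}"

end

theory Submission
  imports Defs
begin

definition central :: "'a::ring_1 \<Rightarrow> bool" where "central x \<longleftrightarrow> (\<forall>y. x * y = y * x)"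

lemma central_0[simp]: "central 0" and central_1[simp]: "central 1"
  by (simp_all add: central_def)

lemma central_add: "central x \<Longrightarrow> central y \<Longrightarrow> central (x + y)"
  by (simp add: central_def distrib_left distrib_right)

lemma central_mult: "central x \<Longrightarrow> central y \<Longrightarrow> central (x * y)"
  unfolding central_def by (metis mult.assoc)

lemma central_uminus: "central x \<Longrightarrow> central (- x)"
  by (simp add: central_def)

lemma central_power: "central x \<Longrightarrow> central (x ^ n)"
  by (induct n) (simp_all add: central_mult)

lemma central_sum: "(\<And>i. i \<in> S \<Longrightarrow> central (f i)) \<Longrightarrow> central (sum f S)"
  unfolding central_def by (simp add: sum_distrib_left sum_distrib_right)

lemma central_of_nat: "central (of_nat n)"
  by (simp add: central_def mult_of_nat_commute)

lemma centralD: "central x \<Longrightarrow> x * y = y * x"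
  by (simp add: central_def)

lemma power_mult_central: "central a \<Longrightarrow> (a * b) ^ n = a ^ n * b ^ n"
proof (induct n)
  case (Suc n)
  have c: "b * a^n = a^n * b" using centralD[OF central_power[OF Suc(2)]] by metis
  have "(a*b)^Suc n = a * (b * (a^n * b^n))" using Suc by (simp add: mult.assoc)
  also have "b * (a^n * b^n) = (b * a^n) * b^n" by (simp add: mult.assoc)
  also have "\<dots> = a^n * (b * b^n)" unfolding c by (simp add: mult.assoc)
  also have "a * (a^n * (b * b^n)) = a ^ Suc n * b ^ Suc n" by (simp add: mult.assoc)
  finally show ?case .
qed simp

lemma binomial_central:
  assumes ca: "central a"
  shows "(a + b)^n = (\<Sum>k\<le>n. (of_nat (n choose k)) * a^k * b^(n-k))"
proof (induct n)
  case 0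
  then show ?case by simp
next
  case (Suc n)
  have decomp: "{0..n+1} = {0} \<union> {n + 1} \<union> {1..n}" and decomp2: "{0..n} = {0} \<union> {1..n}"
    by auto
  have "(a + b)^(n+1) = (a + b) * (\<Sum>k\<le>n. of_nat (n choose k) * a^k * b^(n - k))"
    using Suc.hyps by simp
  also have "\<dots> = a * (\<Sum>k\<le>n. of_nat (n choose k) * a^k * b^(n-k)) +
      b * (\<Sum>k\<le>n. of_nat (n choose k) * a^k * b^(n-k))"
    by (rule distrib_right)
  also have "\<dots> = (\<Sum>k\<le>n. of_nat (n choose k) * a^(k+1) * b^(n-k)) +
      (\<Sum>k\<le>n. of_nat (n choose k) * a^k * b^(n - k + 1))"
  proof -
    have 1: "a * (of_nat c * a^k * b^m) = of_nat c * a^(k+1) * b^m" for c k m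
      by (simp add: mult.assoc mult_of_nat_commute)
    have 2: "b * (of_nat c * a^k * b^m) = of_nat c * a^k * b^(m+1)" for c k m
    proof -
      have "b * (of_nat c * a^k * b^m) = (b * of_nat c) * a^k * b^m"
        by (simp add: mult.assoc)
      also have "\<dots> = of_nat c * (b * a^k) * b^m"
        by (simp add: mult_of_nat_commute mult.assoc)
      also have "b * a^k = a^k * b" using centralD[OF central_power[OF ca]] by metis
      also have "of_nat c * (a^k * b) * b^m = of_nat c * a^k * (b * b^m)"
        by (simp add: mult.assoc)
      finally show ?thesis by simp
    qed
    show ?thesis by (simp only: sum_distrib_left 1 2)
  qed
  also have "\<dots> = (\<Sum>k\<le>n. of_nat (n choose k) * a^k * b^(n + 1 - k)) +
      (\<Sum>k=1..n+1. of_nat (n choose (k - 1)) * a^k * b^(n + 1 - k))"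
    by (simp add: atMost_atLeast0 sum.shift_bounds_cl_Suc_ivl Suc_diff_le del: sum.cl_ivl_Suc)
  also have "\<dots> = b^(n + 1) +
      (\<Sum>k=1..n. of_nat (n choose k) * a^k * b^(n + 1 - k)) + (a^(n + 1) +
      (\<Sum>k=1..n. of_nat (n choose (k - 1)) * a^k * b^(n + 1 - k)))"
      using sum.nat_ivl_Suc' [of 1 n "\<lambda>k. of_nat (n choose (k-1)) * a ^ k * b ^ (n + 1 - k)"]
    by (simp add: sum.atLeast_Suc_atMost atMost_atLeast0)
  also have "\<dots> = a^(n + 1) + b^(n + 1) +
      (\<Sum>k=1..n. of_nat (n + 1 choose k) * a^k * b^(n + 1 - k))"
    by (auto simp add: algebra_simps sum.distrib [symmetric] choose_reduce_nat)
  also have "\<dots> = (\<Sum>k\<le>n+1. of_nat (n + 1 choose k) * a^k * b^(n + 1 - k))"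
    using decomp by (simp add: atMost_atLeast0 algebra_simps)
  finally show ?case
    by simp
qed

lemma of_nat_choose_prime_zero:
  assumes "prime p" "of_nat p = (0::'a::ring_1)" "0 < k" "k < p"
  shows "(of_nat (p choose k) :: 'a) = 0"
proof -
  have "p dvd (p choose k)" using assms by (intro dvd_choose_prime) auto
  then obtain m where "p choose k = p * m" by (auto elim: dvdE)
  then show ?thesis using assms(2) by simp
qed

lemma frob:
  assumes p: "prime p" "of_nat p = (0::'a::ring_1)" and ca: "central (a::'a)"
  shows "(a + b) ^ p = a ^ p + b ^ p"
proof -
  let ?t = "\<lambda>k. of_nat (p choose k) * a^k * b^(p-k)"
  have p0: "p \<noteq> 0" using p(1) by auto
  have "(a + b) ^ p = (\<Sum>k\<le>p. ?t k)" by (rule binomial_central[OF ca])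
  also have "\<dots> = (\<Sum>k\<in>{0,p}. ?t k)"
  proof (rule sum.mono_neutral_right)
    show "\<forall>k\<in>{..p} - {0, p}. ?t k = 0"
    proof
      fix k assume "k \<in> {..p} - {0, p}"
      then have "0 < k" "k < p" by auto
      then show "?t k = 0" using of_nat_choose_prime_zero[OF p] by simp
    qed
  qed auto
  also have "\<dots> = a ^ p + b ^ p" using p0 by (simp add: add.commute)
  finally show ?thesis .
qed

lemma frob_pow:
  assumes p: "prime p" "of_nat p = (0::'a::ring_1)" and ca: "central (a::'a)"
  shows "(a + b) ^ (p ^ k) = a ^ (p ^ k) + b ^ (p ^ k)"
proof (induct k)
  case (Suc k)
  have "(a + b) ^ (p ^ Suc k) = ((a + b) ^ (p ^ k)) ^ p"
    by (simp add: power_mult[symmetric] mult.commute)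
  also have "\<dots> = (a ^ (p ^ k) + b ^ (p ^ k)) ^ p" using Suc by simp
  also have "\<dots> = (a ^ (p ^ k)) ^ p + (b ^ (p ^ k)) ^ p"
    by (rule frob[OF p central_power[OF ca]])
  also have "\<dots> = a ^ (p ^ Suc k) + b ^ (p ^ Suc k)"
    by (simp add: power_mult[symmetric] mult.commute)
  finally show ?case .
qed simp

lemma frob_sum:
  assumes p: "prime p" "of_nat p = (0::'a::ring_1)"
    and "finite S" and "\<And>i. i \<in> S \<Longrightarrow> central (f i :: 'a)"
  shows "(sum f S) ^ (p ^ k) = (\<Sum>i\<in>S. f i ^ (p ^ k))"
  using assms(3,4)
proof (induct S rule: finite_induct)
  case empty
  have "p ^ k \<noteq> 0" using p(1) by (simp add: prime_gt_0_nat)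
  then show ?case by (simp add: power_0_left)
next
  case (insert x F)
  then show ?case by (simp add: frob_pow[OF p])
qed

lemma power_zero_mono: "(x::'a::ring_1) ^ m = 0 \<Longrightarrow> m \<le> n \<Longrightarrow> x ^ n = 0"
  by (metis le_add_diff_inverse mult_zero_left power_add)

lemma pow_pow_zero_mono:
  assumes "prime p" "(x::'a::ring_1) ^ (p ^ m) = 0" "m \<le> n"
  shows "x ^ (p ^ n) = 0"
proof -
  have "p ^ m \<le> p ^ n" using assms by (intro power_increasing) (auto simp: prime_gt_0_nat Suc_leI)
  then show ?thesis using power_zero_mono assms(2) by blast
qed

definition cmp :: "nat \<Rightarrow> (nat \<Rightarrow> 'a::ring_1) \<Rightarrow> (nat \<Rightarrow> 'a) \<Rightarrow> nat \<Rightarrow> 'a" where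
  "cmp q a c i = (\<Sum>j\<le>i. a (i - j) ^ (q ^ j) * c j)"

lemma cmp_assoc:
  assumes p: "prime q" "of_nat q = (0::'a::ring_1)"
    and ca: "\<And>i. central (a i :: 'a)" and cc: "\<And>i. central (c i)"
  shows "cmp q (cmp q a c) f i = cmp q a (cmp q c f) i"
proof -
  define g where "g j m = a (i - (j+m)) ^ (q ^ (j+m)) * c m ^ (q ^ j) * f j" for j m
  have "cmp q (cmp q a c) f i = (\<Sum>j\<le>i. cmp q a c (i-j) ^ q^j * f j)"
    by (rule cmp_def)
  also have "\<dots> = (\<Sum>j\<le>i. (\<Sum>m\<le>i-j. g j m))"
  proof (rule sum.cong[OF refl])
    fix j assume "j \<in> {..i}"
    have "(cmp q a c (i - j)) ^ (q ^ j) = (\<Sum>m\<le>i-j. (a (i - j - m) ^ (q ^ m) * c m) ^ (q ^ j))"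
      unfolding cmp_def by (rule frob_sum[OF p]) (auto intro: central_mult central_power ca cc)
    also have "\<dots> = (\<Sum>m\<le>i-j. a (i - (j+m)) ^ (q ^ (j+m)) * c m ^ (q ^ j))"
      by (rule sum.cong[OF refl])
         (simp add: power_mult_central[OF central_power[OF ca]] power_mult[symmetric]
            power_add[symmetric] add.commute diff_diff_eq)
    finally show "cmp q a c (i - j) ^ q ^ j * f j = (\<Sum>m\<le>i-j. g j m)"
      by (simp add: g_def sum_distrib_right)
  qed
  also have "\<dots> = (\<Sum>(j,m)\<in>Sigma {..i} (\<lambda>j. {..i-j}). g j m)"
    by (rule sum.Sigma) auto
  also have "Sigma {..i} (\<lambda>j. {..i-j}) = {(j,m). j + m \<le> i}" by auto
  also have "(\<Sum>(j,m)\<in>{(j,m). j + m \<le> i}. g j m) = (\<Sum>l\<le>i. \<Sum>x\<le>l. g x (l - x))"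
    by (rule sum.triangle_reindex_eq)
  also have "\<dots> = cmp q a (cmp q c f) i"
    unfolding cmp_def[of q a]
  proof (rule sum.cong[OF refl])
    fix l assume l: "l \<in> {..i}"
    show "(\<Sum>x\<le>l. g x (l - x)) = a (i - l) ^ q ^ l * cmp q c f l"
      unfolding sum_distrib_left cmp_def
    proof (rule sum.cong[OF refl])
      fix x assume "x \<in> {..l}"
      then have "x + (l - x) = l" by auto
      then show "g x (l - x) = a (i - l) ^ q ^ l * (c (l - x) ^ q ^ x * f x)"
        by (simp add: g_def mult.assoc)
    qed
  qed
  finally show ?thesis .
qed

lemma cmp_one_right:
  "cmp q a (\<lambda>i. if i = 0 then 1 else 0) i = a i"
  unfolding cmp_def by (simp add: if_distrib cong: if_cong)

lemma cmp_one_left: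
  assumes "0 < q"
  shows "cmp q (\<lambda>i. if i = 0 then 1 else 0) c i = c i"
proof -
  have "cmp q (\<lambda>i. if i = 0 then 1 else 0) c i = (\<Sum>j\<le>i. if j = i then c j else 0)"
    unfolding cmp_def
    by (rule sum.cong[OF refl]) (use assms in \<open>auto simp: power_0_left\<close>)
  also have "\<dots> = c i" by simp
  finally show ?thesis .
qed

lemma cmp_zero_right: "cmp q a (\<lambda>i. 0) i = 0"
  unfolding cmp_def by simp

lemma cmp_add_right: "cmp q a (\<lambda>i. c i + d i) i = cmp q a c i + cmp q a d i"
  unfolding cmp_def by (simp add: distrib_left sum.distrib)

definition trunc :: "nat \<Rightarrow> nat \<Rightarrow> (nat \<Rightarrow> 'a::ring_1) \<Rightarrow> bool" where
  "trunc q n a \<longleftrightarrow> (\<forall>i\<in>{1..n}. a i ^ (q ^ (n - i + 1)) = 0) \<and> (\<forall>i\<ge>n + 1. a i = 0)"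

lemma trunc_pow_zero:
  assumes "trunc q n a" "prime q" "1 \<le> k" "n + 1 \<le> k + j"
  shows "a k ^ (q ^ j) = 0"
proof (cases "k \<le> n")
  case True
  then have "a k ^ (q ^ (n - k + 1)) = 0" using assms(1,3) unfolding trunc_def by auto
  then show ?thesis by (rule pow_pow_zero_mono[OF assms(2)]) (use assms(4) True in auto)
next
  case False
  then have "a k = 0" using assms(1) unfolding trunc_def by auto
  moreover have "q ^ j \<noteq> 0" using assms(2) by (simp add: prime_gt_0_nat)
  ultimately show ?thesis by (simp add: power_0_left)
qed

lemma cmp_high_zero:
  assumes "trunc q n a" "prime q" "\<And>j. n < j \<Longrightarrow> d j = 0" "n < i"
  shows "cmp q a d i = 0"
  unfolding cmp_def
proof (rule sum.neutral, rule ballI)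
  fix j assume j: "j \<in> {..i}"
  show "a (i - j) ^ q ^ j * d j = 0"
  proof (cases "n < j")
    case True then show ?thesis using assms(3) by simp
  next
    case False
    then have "a (i - j) ^ q ^ j = 0"
      using j assms(4) by (intro trunc_pow_zero[OF assms(1,2)]) auto
    then show ?thesis by simp
  qed
qed

lemma cmp_trunc:
  assumes p: "prime q" "of_nat q = (0::'a::ring_1)"
    and ca: "\<And>i. central (a i :: 'a)" and cc: "\<And>i. central (c i)"
    and ta: "trunc q n a" and tc: "trunc q n c"
  shows "trunc q n (cmp q a c)"
  unfolding trunc_def
proof (intro conjI ballI allI impI)
  fix i assume "n + 1 \<le> i"
  then show "cmp q a c i = 0"
    using tc by (intro cmp_high_zero[OF ta p(1)]) (auto simp: trunc_def)
next
  fix i assume i: "i \<in> {1..n}"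
  define e where "e = n - i + 1"
  have "cmp q a c i ^ (q ^ e) = (\<Sum>j\<le>i. (a (i - j) ^ (q ^ j) * c j) ^ (q ^ e))"
    unfolding cmp_def by (rule frob_sum[OF p]) (auto intro: central_mult central_power ca cc)
  also have "\<dots> = (\<Sum>j\<le>i. a (i - j) ^ (q ^ (j + e)) * c j ^ (q ^ e))"
    by (rule sum.cong[OF refl])
       (simp add: power_mult_central[OF central_power[OF ca]] power_mult[symmetric] power_add)
  also have "\<dots> = 0"
  proof (rule sum.neutral, rule ballI)
    fix j assume j: "j \<in> {..i}"
    show "a (i - j) ^ (q ^ (j + e)) * c j ^ (q ^ e) = 0"
    proof (cases "j = i")
      case True
      then have "c j ^ (q ^ e) = 0" using tc i unfolding trunc_def e_def by auto
      then show ?thesis by simp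
    next
      case False
      then have "a (i - j) ^ (q ^ (j + e)) = 0"
        using j i by (intro trunc_pow_zero[OF ta p(1)]) (auto simp: e_def)
      then show ?thesis by simp
    qed
  qed
  finally show "cmp q a c i ^ (q ^ (n - i + 1)) = 0" by (simp add: e_def)
qed

function sol :: "nat \<Rightarrow> (nat \<Rightarrow> 'a::ring_1) \<Rightarrow> (nat \<Rightarrow> 'a) \<Rightarrow> nat \<Rightarrow> 'a" where
  "sol q a r i = r i - (\<Sum>j<i. a (i - j) ^ (q ^ j) * sol q a r j)"
  by auto
termination by (relation "measure (\<lambda>(q, a, r, i). i)") auto

declare sol.simps[simp del]

lemma cmp_sol:
  assumes "a 0 = 1"
  shows "cmp q a (sol q a r) i = r i"
proof -
  have "cmp q a (sol q a r) i = (\<Sum>j<i. a (i - j) ^ (q ^ j) * sol q a r j) + sol q a r i"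
    unfolding cmp_def using assms by (simp add: lessThan_Suc_atMost[symmetric])
  also have "\<dots> = r i" by (subst (2) sol.simps) simp
  finally show ?thesis .
qed

lemma sol_central:
  assumes "\<And>i. central (a i)" "\<And>i. central (r i)"
  shows "central (sol q a r i)"
proof (induct i rule: less_induct)
  case (less i)
  have "central (r i - (\<Sum>j<i. a (i - j) ^ (q ^ j) * sol q a r j))"
    unfolding diff_conv_add_uminus
    by (intro central_add central_uminus central_sum central_mult central_power assms(1,2) less) auto
  then show ?case by (subst sol.simps)
qed

lemma sol_high_zero:
  assumes "trunc q n a" "prime q" "\<And>j. n < j \<Longrightarrow> r j = 0"
  shows "n < i \<Longrightarrow> sol q a r i = 0"
proof (induct i rule: less_induct)
  case (less i)
  have "(\<Sum>j<i. a (i - j) ^ (q ^ j) * sol q a r j) = 0"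
  proof (rule sum.neutral, rule ballI)
    fix j assume j: "j \<in> {..<i}"
    show "a (i - j) ^ q ^ j * sol q a r j = 0"
    proof (cases "n < j")
      case True then show ?thesis using less j by simp
    next
      case False
      then have "a (i - j) ^ q ^ j = 0"
        using j less by (intro trunc_pow_zero[OF assms(1,2)]) auto
      then show ?thesis by simp
    qed
  qed
  then show ?case using less assms(3) by (subst sol.simps) simp
qed

lemma sol_trunc:
  assumes p: "prime q" "of_nat q = (0::'a::ring_1)"
    and ca: "\<And>i. central (a i :: 'a)" and ta: "trunc q n a"
    and r: "\<And>i. r i = (if i = 0 then 1 else 0)"
  shows "trunc q n (sol q a r)"
  unfolding trunc_def
proof (intro conjI ballI allI impI)
  fix i assume "n + 1 \<le> i"
  then show "sol q a r i = 0"
    using r by (intro sol_high_zero[OF ta p(1)]) auto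
next
  have cr: "central (r i)" for i using r[of i] by simp
  have cs: "central (sol q a r i)" for i by (rule sol_central[OF ca cr])
  fix i assume i: "i \<in> {1..n}"
  define e where "e = n - i + 1"
  have "sol q a r i = - (\<Sum>j<i. a (i - j) ^ (q ^ j) * sol q a r j)"
  proof -
    have "sol q a r i = r i - (\<Sum>j<i. a (i - j) ^ (q ^ j) * sol q a r j)" by (rule sol.simps)
    moreover have "r i = 0" using i r[of i] by auto
    ultimately show ?thesis by simp
  qed
  then have "sol q a r i ^ (q ^ e) = (-1) ^ (q ^ e) * (\<Sum>j<i. a (i - j) ^ (q ^ j) * sol q a r j) ^ (q ^ e)"
    by (simp only: power_minus[of "\<Sum>j<i. a (i - j) ^ (q ^ j) * sol q a r j"])
  also have "(\<Sum>j<i. a (i - j) ^ (q ^ j) * sol q a r j) ^ (q ^ e)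
       = (\<Sum>j<i. (a (i - j) ^ (q ^ j) * sol q a r j) ^ (q ^ e))"
    by (rule frob_sum[OF p]) (auto intro: central_mult central_power ca cs)
  also have "\<dots> = (\<Sum>j<i. a (i - j) ^ (q ^ (j + e)) * sol q a r j ^ (q ^ e))"
    by (rule sum.cong[OF refl])
       (simp add: power_mult_central[OF central_power[OF ca]] power_mult[symmetric] power_add)
  also have "\<dots> = 0"
  proof (rule sum.neutral, rule ballI)
    fix j assume j: "j \<in> {..<i}"
    then have "a (i - j) ^ (q ^ (j + e)) = 0"
      using i by (intro trunc_pow_zero[OF ta p(1)]) (auto simp: e_def)
    then show "a (i - j) ^ (q ^ (j + e)) * sol q a r j ^ (q ^ e) = 0" by simp
  qed
  finally show "sol q a r i ^ (q ^ (n - i + 1)) = 0" by (simp add: e_def)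
qed

lemma subgroup_generic:
  fixes G (structure) and ri
  assumes closed: "\<And>x y. x \<in> carrier G \<Longrightarrow> y \<in> carrier G \<Longrightarrow> x \<otimes> y \<in> carrier G"
    and assoc: "\<And>x y z. x \<in> carrier G \<Longrightarrow> y \<in> carrier G \<Longrightarrow> z \<in> carrier G \<Longrightarrow>
                  (x \<otimes> y) \<otimes> z = x \<otimes> (y \<otimes> z)"
    and one: "\<one> \<in> carrier G"
    and lone: "\<And>x. x \<in> carrier G \<Longrightarrow> \<one> \<otimes> x = x"
    and rone: "\<And>x. x \<in> carrier G \<Longrightarrow> x \<otimes> \<one> = x"
    and ric: "\<And>x. x \<in> carrier G \<Longrightarrow> ri x \<in> carrier G"
    and rinv: "\<And>x. x \<in> carrier G \<Longrightarrow> x \<otimes> ri x = \<one>"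
    and Hsub: "H \<subseteq> carrier G" and Hone: "\<one> \<in> H"
    and Hmult: "\<And>x y. x \<in> H \<Longrightarrow> y \<in> H \<Longrightarrow> x \<otimes> y \<in> H"
    and Hinv: "\<And>x. x \<in> H \<Longrightarrow> ri x \<in> H"
  shows "subgroup H G"
proof -
  have linv: "ri x \<otimes> x = \<one>" if x: "x \<in> carrier G" for x
  proof -
    have "x = x \<otimes> (ri x \<otimes> ri (ri x))" using rinv[OF ric[OF x]] rone[OF x] by simp
    also have "\<dots> = ri (ri x)" using assoc[OF x ric[OF x] ric[OF ric[OF x]]] rinv[OF x]
        lone[OF ric[OF ric[OF x]]] by simp
    finally show ?thesis using rinv[OF ric[OF x]] by simp
  qed
  have grp: "group G"
    by (rule groupI) (use closed one assoc lone linv ric in blast)+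
  have inv: "inv x = ri x" if "x \<in> carrier G" for x
    by (rule group.inv_equality[OF grp linv[OF that] that ric[OF that]])
  show ?thesis
  proof
    show "H \<subseteq> carrier G" by fact
    show "\<one> \<in> H" by fact
    show "x \<otimes> y \<in> H" if "x \<in> H" "y \<in> H" for x y using Hmult that .
    show "inv x \<in> H" if "x \<in> H" for x using inv[of x] Hinv[OF that] Hsub that by auto
  qed
qed

context
  fixes p :: nat and A :: "int \<Rightarrow> 'a::ring_1 set"
  assumes GA: "graded_comm_algebra_Fp p A"
begin

lemma hz: "0 \<in> A k" using GA unfolding graded_comm_algebra_Fp_def by blast
lemma hadd: "x \<in> A k \<Longrightarrow> y \<in> A k \<Longrightarrow> x + y \<in> A k" using GA unfolding graded_comm_algebra_Fp_def by blast
lemma hneg: "x \<in> A k \<Longrightarrow> - x \<in> A k" using GA unfolding graded_comm_algebra_Fp_def by blast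
lemma hdiff: "x \<in> A k \<Longrightarrow> y \<in> A k \<Longrightarrow> x - y \<in> A k" unfolding diff_conv_add_uminus by (intro hadd hneg)
lemma hone: "1 \<in> A 0" using GA unfolding graded_comm_algebra_Fp_def by blast
lemma hmult: "x \<in> A i \<Longrightarrow> y \<in> A j \<Longrightarrow> x * y \<in> A (i + j)" using GA unfolding graded_comm_algebra_Fp_def by blast
lemma hchar: "of_nat p = (0::'a)" using GA unfolding graded_comm_algebra_Fp_def by blast
lemma hsign: "x \<in> A i \<Longrightarrow> y \<in> A j \<Longrightarrow> x * y = (-1) ^ nat \<bar>i * j\<bar> * (y * x)" using GA unfolding graded_comm_algebra_Fp_def by blast
lemma hdec: "\<exists>!c. is_decomp A x c" using GA unfolding graded_comm_algebra_Fp_def by blast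

lemma heq: "x \<in> A k \<Longrightarrow> k = k' \<Longrightarrow> x \<in> A k'" by simp

lemma hpow: "x \<in> A k \<Longrightarrow> x ^ m \<in> A (k * int m)"
proof (induct m)
  case 0 then show ?case using hone by simp
next
  case (Suc m)
  have "x * x ^ m \<in> A (k + k * int m)" by (rule hmult[OF Suc(2) Suc(1)[OF Suc(2)]])
  then show ?case by (simp add: algebra_simps)
qed

lemma hsum: "(\<And>i. i \<in> S \<Longrightarrow> f i \<in> A k) \<Longrightarrow> sum f S \<in> A k"
  by (induct S rule: infinite_finite_induct) (auto intro: hz hadd)

lemma hcentral:
  assumes x: "x \<in> A k" and ev: "even k \<or> (-1::'a) = 1"
  shows "central x"
  unfolding central_def
proof
  fix y
  obtain c where c: "is_decomp A y c" using hdec by blast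
  let ?S = "{j. c j \<noteq> 0}"
  have y: "y = sum c ?S" and cA: "\<And>j. c j \<in> A j" using c unfolding is_decomp_def by auto
  have "x * c j = c j * x" for j
  proof -
    have "(-1::'a) ^ nat \<bar>k * j\<bar> = 1"
      using ev
    proof
      assume "even k"
      then have "even (nat \<bar>k * j\<bar>)" by (simp add: even_nat_iff)
      then show ?thesis by simp
    next
      assume "(-1::'a) = 1" then show ?thesis by simp
    qed
    then show ?thesis using hsign[OF x cA[of j]] by simp
  qed
  then show "x * y = y * x" unfolding y by (simp add: sum_distrib_left sum_distrib_right)
qed

lemma hginv:
  assumes x: "x \<in> A k" and ev: "even k"
  shows "ginv A x = x"
proof -
  define cx where "cx = (\<lambda>j. if j = k then x else (0::'a))"
  have S: "{j. cx j \<noteq> 0} = (if x = 0 then {} else {k})" by (auto simp: cx_def)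
  have dec: "is_decomp A x cx"
    unfolding is_decomp_def using x hz by (auto simp: S cx_def)
  have "(THE c. is_decomp A x c) = cx" proof (rule the_equality)
    show "is_decomp A x cx" by (rule dec)
    show "c = cx" if "is_decomp A x c" for c using hdec[of x] dec that by blast
  qed
  then have cmpx: "comp A j x = cx j" for j by (simp add: comp_def)
  have "ginv A x = (\<Sum>j\<in>{j. cx j \<noteq> 0}. (-1) ^ nat \<bar>j\<bar> * cx j)"
    unfolding ginv_def cmpx ..
  also have "\<dots> = x"
  proof (cases "x = 0")
    case False
    have "even (nat \<bar>k\<bar>)" using ev by (simp add: even_nat_iff)
    then show ?thesis using False by (simp add: S cx_def)
  qed (simp add: S)
  finally show ?thesis .
qed

lemma term_deg:
  assumes "j \<le> i" "u \<in> A (e * (int q ^ (i - j) - 1))" "c \<in> A (e * (int q ^ j - 1) + s)"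
  shows "u ^ (q ^ j) * c \<in> A (e * (int q ^ i - 1) + s)"
proof -
  have h: "int q ^ (i - j) * int q ^ j = int q ^ i"
    using assms(1) by (simp add: power_add[symmetric])
  have mem: "u ^ (q ^ j) * c \<in> A (e * (int q ^ (i - j) - 1) * int (q ^ j) + (e * (int q ^ j - 1) + s))"
    by (rule hmult[OF hpow[OF assms(2)] assms(3)])
  have eq: "e * (int q ^ (i - j) - 1) * int (q ^ j) + (e * (int q ^ j - 1) + s)
      = e * (int q ^ i - 1) + s"
    by (simp add: algebra_simps flip: h)
  show ?thesis by (rule heq[OF mem eq])
qed

lemma cmp_deg:
  assumes "\<And>k. a k \<in> A (e * (int q ^ k - 1))" "\<And>k. c k \<in> A (e * (int q ^ k - 1) + s)"
  shows "cmp q a c i \<in> A (e * (int q ^ i - 1) + s)"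
  unfolding cmp_def by (rule hsum) (auto intro!: term_deg assms)

lemma sol_deg:
  assumes "\<And>k. a k \<in> A (e * (int q ^ k - 1))" "\<And>k. r k \<in> A (e * (int q ^ k - 1) + s)"
  shows "sol q a r i \<in> A (e * (int q ^ i - 1) + s)"
proof (induct i rule: less_induct)
  case (less i)
  have "r i - (\<Sum>j<i. a (i - j) ^ (q ^ j) * sol q a r j) \<in> A (e * (int q ^ i - 1) + s)"
    by (intro hdiff assms hsum term_deg less) auto
  then show ?case by (subst sol.simps)
qed

end

abbreviation one_seq :: "nat \<Rightarrow> 'a::ring_1" where "one_seq \<equiv> (\<lambda>i. if i = 0 then 1 else 0)"

lemma trunc_one: "trunc q n (one_seq :: nat \<Rightarrow> 'a::ring_1)" if "0 < q"
  using that unfolding trunc_def by (auto simp: power_0_left)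

lemma G2_case:
  fixes A :: "int \<Rightarrow> 'a::ring_1 set"
  assumes GA: "graded_comm_algebra_Fp 2 A"
  shows "subgroup (G2n n A) (G2 A)"
proof -
  have p: "prime (2::nat)" "of_nat 2 = (0::'a)" using hchar[OF GA] by auto
  have m1: "(-1::'a) = 1"
  proof -
    have "(1::'a) + 1 = 0" using p(2) by simp
    then show ?thesis by (rule minus_unique)
  qed
  have car: "carrier (G2 A) = {\<alpha>. (\<forall>i. \<alpha> i \<in> A (2 ^ i - 1)) \<and> \<alpha> 0 = 1}"
    and mul: "\<And>\<alpha> \<beta>. \<alpha> \<otimes>\<^bsub>G2 A\<^esub> \<beta> = cmp 2 \<alpha> \<beta>"
    and one: "\<one>\<^bsub>G2 A\<^esub> = one_seq"
    by (simp_all add: G2_def cmp_def[abs_def])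
  have H: "G2n n A = {\<alpha> \<in> carrier (G2 A). trunc 2 n \<alpha>}"
    by (simp add: G2n_def trunc_def)
  have deg: "\<alpha> k \<in> A (1 * (int 2 ^ k - 1))" if "\<alpha> \<in> carrier (G2 A)" for \<alpha> k
    using that by (simp add: car)
  have cen: "central (\<alpha> k)" if "\<alpha> \<in> carrier (G2 A)" for \<alpha> k
    using that by (intro hcentral[OF GA _ disjI2[OF m1]]) (auto simp: car)
  have degone: "one_seq k \<in> A (1 * (int 2 ^ k - 1) + 0)" for k
    using hone[OF GA] hz[OF GA] by auto
  have closed: "cmp 2 \<alpha> \<beta> \<in> carrier (G2 A)" if "\<alpha> \<in> carrier (G2 A)" "\<beta> \<in> carrier (G2 A)" for \<alpha> \<beta>
  proof -
    have "cmp 2 \<alpha> \<beta> i \<in> A (1 * (int 2 ^ i - 1) + 0)" for i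
      by (rule cmp_deg[OF GA]) (use deg that in auto)
    moreover have "cmp 2 \<alpha> \<beta> 0 = 1" using that by (simp add: car cmp_def)
    ultimately show ?thesis by (simp add: car)
  qed
  let ?ri = "\<lambda>\<alpha>. sol 2 \<alpha> one_seq"
  show ?thesis
  proof (rule subgroup_generic[where ri = ?ri])
    show "x \<otimes>\<^bsub>G2 A\<^esub> y \<in> carrier (G2 A)" if "x \<in> carrier (G2 A)" "y \<in> carrier (G2 A)" for x y
      using closed[OF that] by (simp add: mul)
    show "x \<otimes>\<^bsub>G2 A\<^esub> y \<otimes>\<^bsub>G2 A\<^esub> z = x \<otimes>\<^bsub>G2 A\<^esub> (y \<otimes>\<^bsub>G2 A\<^esub> z)"
      if "x \<in> carrier (G2 A)" "y \<in> carrier (G2 A)" "z \<in> carrier (G2 A)" for x y z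
      unfolding mul by (rule ext, rule cmp_assoc[OF p]) (use cen that in auto)
    show "\<one>\<^bsub>G2 A\<^esub> \<in> carrier (G2 A)" using hone[OF GA] hz[OF GA] by (auto simp: car one)
    show "\<one>\<^bsub>G2 A\<^esub> \<otimes>\<^bsub>G2 A\<^esub> x = x" for x
      unfolding mul one by (rule ext, rule cmp_one_left) simp
    show "x \<otimes>\<^bsub>G2 A\<^esub> \<one>\<^bsub>G2 A\<^esub> = x" for x
      unfolding mul one by (rule ext, rule cmp_one_right)
    show "?ri x \<in> carrier (G2 A)" if "x \<in> carrier (G2 A)" for x
    proof -
      have "sol 2 x one_seq i \<in> A (1 * (int 2 ^ i - 1) + 0)" for i
        by (rule sol_deg[OF GA]) (use deg that degone in auto)
      moreover have "sol 2 x one_seq 0 = 1" by (subst sol.simps) simp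
      ultimately show ?thesis by (simp add: car)
    qed
    show "x \<otimes>\<^bsub>G2 A\<^esub> ?ri x = \<one>\<^bsub>G2 A\<^esub>" if "x \<in> carrier (G2 A)" for x
      unfolding mul one by (rule ext, rule cmp_sol) (use that in \<open>simp add: car\<close>)
    show "G2n n A \<subseteq> carrier (G2 A)" unfolding H by auto
    show "\<one>\<^bsub>G2 A\<^esub> \<in> G2n n A" unfolding H
      using \<open>\<one>\<^bsub>G2 A\<^esub> \<in> carrier (G2 A)\<close> trunc_one[of 2 n] by (simp add: one)
    show "x \<otimes>\<^bsub>G2 A\<^esub> y \<in> G2n n A" if "x \<in> G2n n A" "y \<in> G2n n A" for x y
      using that closed unfolding H mul by (auto intro!: cmp_trunc[OF p] cen)
    show "?ri x \<in> G2n n A" if "x \<in> G2n n A" for x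
    proof -
      have "x \<in> carrier (G2 A)" "trunc 2 n x" using that H by auto
      moreover have "sol 2 x one_seq i \<in> A (1 * (int 2 ^ i - 1) + 0)" for i
        by (rule sol_deg[OF GA]) (use deg \<open>x \<in> carrier (G2 A)\<close> degone in auto)
      moreover have "sol 2 x one_seq 0 = 1" by (subst sol.simps) simp
      ultimately show ?thesis unfolding H
        by (auto simp: car intro!: sol_trunc[OF p] cen)
    qed
  qed
qed

lemma epow_formula:
  assumes ca: "central a" and ga: "ginv A a = a"
  shows "epow A (a, b) m = (a ^ m, of_nat m * (a ^ (m - 1) * b))"
proof (induct m)
  case 0 show ?case by simp
next
  case (Suc m)
  have "epow A (a,b) (Suc m) = emul A (a^m, of_nat m * (a^(m-1)*b)) (a,b)" using Suc by simp
  also have "\<dots> = (a^m * a, a^m * b + of_nat m * (a^(m-1)*b) * a)" by (simp add: emul_def ga)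
  also have "of_nat m * (a^(m-1)*b) * a = of_nat m * (a^m * b)"
  proof (cases m)
    case 0 then show ?thesis by simp
  next
    case (Suc k)
    have "b * a = a * b" using centralD[OF ca] by metis
    have "a^k * b * a = a^k * (b * a)" by (simp add: mult.assoc)
    also have "\<dots> = a^k * (a * b)" using \<open>b * a = a * b\<close> by simp
    also have "\<dots> = (a^k * a) * b" by (simp add: mult.assoc)
    also have "a^k * a = a^(Suc k)" by (rule power_Suc2[symmetric])
    finally have "a^k * b * a = a^(Suc k) * b" .
    then show ?thesis using Suc by (simp add: mult.assoc)
  qed
  also have "a^m * b + of_nat m * (a^m*b) = of_nat (Suc m) * (a^(Suc m - 1) * b)"
    by (simp add: algebra_simps)
  also have "a^m * a = a ^ Suc m" by (rule power_Suc2[symmetric])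
  finally show ?case .
qed

lemma epow_pp:
  assumes ca: "central (fst x)" and ga: "ginv A (fst x) = fst x" and p: "of_nat p = (0::'a::ring_1)"
  shows "epow A (x :: 'a \<times> 'a) (p ^ j) = (fst x ^ (p ^ j), if j = 0 then snd x else 0)"
proof -
  have "epow A x (p ^ j) = epow A (fst x, snd x) (p ^ j)" by simp
  also have "\<dots> = (fst x ^ (p ^ j), of_nat (p ^ j) * (fst x ^ (p ^ j - 1) * snd x))"
    by (rule epow_formula[OF ca ga])
  also have "\<dots> = (fst x ^ (p ^ j), if j = 0 then snd x else 0)"
    using p by (cases j) (simp_all add: of_nat_power)
  finally show ?thesis .
qed

lemma Godd_mult:
  assumes p: "of_nat p = (0::'a::ring_1)"
    and ca: "\<And>k. central (fst (\<alpha> k :: 'a \<times> 'a))" and ga: "\<And>k. ginv A (fst (\<alpha> k)) = fst (\<alpha> k)"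
    and gb: "\<And>k. ginv A (fst (\<beta> k)) = fst (\<beta> k)" and b0: "fst (\<beta> 0) = 1"
  shows "(\<alpha> \<otimes>\<^bsub>Godd p A\<^esub> \<beta>) i = (cmp p (\<lambda>k. fst (\<alpha> k)) (\<lambda>k. fst (\<beta> k)) i,
            cmp p (\<lambda>k. fst (\<alpha> k)) (\<lambda>k. snd (\<beta> k)) i + snd (\<alpha> i))"
proof -
  have t: "emul A (epow A (\<alpha> (i - j)) (p ^ j)) (\<beta> j) =
     (fst (\<alpha> (i - j)) ^ (p ^ j) * fst (\<beta> j),
      fst (\<alpha> (i - j)) ^ (p ^ j) * snd (\<beta> j) + (if j = 0 then snd (\<alpha> i) * fst (\<beta> 0) else 0))" for j
    by (simp add: epow_pp[OF ca ga p] emul_def gb)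
  have "(\<alpha> \<otimes>\<^bsub>Godd p A\<^esub> \<beta>) i = (\<Sum>j\<le>i. emul A (epow A (\<alpha> (i - j)) (p ^ j)) (\<beta> j))"
    by (simp add: Godd_def)
  also have "\<dots> = (\<Sum>j\<le>i. (fst (\<alpha> (i - j)) ^ (p ^ j) * fst (\<beta> j),
      fst (\<alpha> (i - j)) ^ (p ^ j) * snd (\<beta> j) + (if j = 0 then snd (\<alpha> i) * fst (\<beta> 0) else 0)))"
    unfolding t ..
  also have "\<dots> = (cmp p (\<lambda>k. fst (\<alpha> k)) (\<lambda>k. fst (\<beta> k)) i,
            cmp p (\<lambda>k. fst (\<alpha> k)) (\<lambda>k. snd (\<beta> k)) i + snd (\<alpha> i))"
    by (simp add: sum_prod sum.distrib cmp_def b0)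
  finally show ?thesis .
qed

lemma Godd_case:
  fixes A :: "int \<Rightarrow> 'a::ring_1 set"
  assumes GA: "graded_comm_algebra_Fp p A" and pp: "prime p"
  shows "subgroup (Goddn p n A) (Godd p A)"
proof -
  have p: "prime p" "of_nat p = (0::'a)" using pp hchar[OF GA] by auto
  have p0: "0 < p" using pp by (simp add: prime_gt_0_nat)
  let ?G = "Godd p A"
  have car: "carrier ?G = {\<alpha>. (\<forall>i. fst (\<alpha> i) \<in> A (2 * (int p ^ i - 1)) \<and>
                 snd (\<alpha> i) \<in> A (2 * (int p ^ i - 1) + 1)) \<and> fst (\<alpha> 0) = 1}"
    by (simp add: Godd_def)
  have oneG: "\<one>\<^bsub>?G\<^esub> = (\<lambda>i. if i = 0 then (1, 0) else (0, 0))"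
    by (simp add: Godd_def)
  have Fone: "(\<lambda>k. fst (\<one>\<^bsub>?G\<^esub> k)) = one_seq" by (simp add: oneG fun_eq_iff)
  have Sone: "(\<lambda>k. snd (\<one>\<^bsub>?G\<^esub> k)) = (\<lambda>k. 0)" by (simp add: oneG fun_eq_iff)
  have Sone': "snd (\<one>\<^bsub>?G\<^esub> k) = 0" for k by (simp add: oneG)
  have degF: "fst (\<alpha> k) \<in> A (2 * (int p ^ k - 1) + 0)" if "\<alpha> \<in> carrier ?G" for \<alpha> k
    using that by (simp add: car)
  have degF': "fst (\<alpha> k) \<in> A (2 * (int p ^ k - 1))" if "\<alpha> \<in> carrier ?G" for \<alpha> k
    using that by (simp add: car)
  have degS: "snd (\<alpha> k) \<in> A (2 * (int p ^ k - 1) + 1)" if "\<alpha> \<in> carrier ?G" for \<alpha> k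
    using that by (simp add: car)
  have cen: "central (fst (\<alpha> k))" if "\<alpha> \<in> carrier ?G" for \<alpha> k
    by (rule hcentral[OF GA degF'[OF that]]) simp
  have gfix: "ginv A (fst (\<alpha> k)) = fst (\<alpha> k)" if "\<alpha> \<in> carrier ?G" for \<alpha> k
    by (rule hginv[OF GA degF'[OF that]]) simp
  have mulf: "\<alpha> \<otimes>\<^bsub>?G\<^esub> \<beta> = (\<lambda>i. (cmp p (\<lambda>k. fst (\<alpha> k)) (\<lambda>k. fst (\<beta> k)) i,
            cmp p (\<lambda>k. fst (\<alpha> k)) (\<lambda>k. snd (\<beta> k)) i + snd (\<alpha> i)))"
    if "\<alpha> \<in> carrier ?G" "\<beta> \<in> carrier ?G" for \<alpha> \<beta>
    by (rule ext, rule Godd_mult[OF p(2)]) (use that cen gfix in \<open>auto simp: car\<close>)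
  have onec: "\<one>\<^bsub>?G\<^esub> \<in> carrier ?G"
    using hone[OF GA] hz[OF GA] by (auto simp: car oneG)
  have closed: "\<alpha> \<otimes>\<^bsub>?G\<^esub> \<beta> \<in> carrier ?G" if "\<alpha> \<in> carrier ?G" "\<beta> \<in> carrier ?G" for \<alpha> \<beta>
  proof -
    have "cmp p (\<lambda>k. fst (\<alpha> k)) (\<lambda>k. fst (\<beta> k)) i \<in> A (2 * (int p ^ i - 1) + 0)" for i
      by (rule cmp_deg[OF GA]) (use degF that in auto)
    moreover have "cmp p (\<lambda>k. fst (\<alpha> k)) (\<lambda>k. snd (\<beta> k)) i + snd (\<alpha> i) \<in> A (2 * (int p ^ i - 1) + 1)" for i
      by (intro hadd[OF GA] cmp_deg[OF GA] degS that) (use degF that in auto)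
    moreover have "cmp p (\<lambda>k. fst (\<alpha> k)) (\<lambda>k. fst (\<beta> k)) 0 = 1" using that by (simp add: car cmp_def)
    ultimately show ?thesis unfolding mulf[OF that] by (simp add: car)
  qed
  let ?ri = "\<lambda>\<alpha> i. (sol p (\<lambda>k. fst (\<alpha> k)) one_seq i, sol p (\<lambda>k. fst (\<alpha> k)) (\<lambda>k. - snd (\<alpha> k)) i)"
  have ric: "?ri x \<in> carrier ?G" if "x \<in> carrier ?G" for x
  proof -
    have "sol p (\<lambda>k. fst (x k)) one_seq i \<in> A (2 * (int p ^ i - 1) + 0)" for i
      by (rule sol_deg[OF GA]) (use degF that hone[OF GA] hz[OF GA] in auto)
    moreover have "sol p (\<lambda>k. fst (x k)) (\<lambda>k. - snd (x k)) i \<in> A (2 * (int p ^ i - 1) + 1)" for i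
      by (rule sol_deg[OF GA]) (use degF degS that hneg[OF GA] in auto)
    moreover have "sol p (\<lambda>k. fst (x k)) one_seq 0 = 1" by (subst sol.simps) simp
    ultimately show ?thesis by (simp add: car)
  qed
  have Hc: "Goddn p n A = {\<alpha> \<in> carrier ?G. trunc p n (\<lambda>k. fst (\<alpha> k)) \<and> (\<forall>i. n < i \<longrightarrow> snd (\<alpha> i) = 0)}"
  proof -
    have "(\<forall>i\<in>{1..n}. epow A (\<alpha> i) (p ^ (n - i + 1)) = (0, 0)) \<and> (\<forall>i\<ge>n + 1. \<alpha> i = (0, 0))
      \<longleftrightarrow> trunc p n (\<lambda>k. fst (\<alpha> k)) \<and> (\<forall>i. n < i \<longrightarrow> snd (\<alpha> i) = 0)"
      if "\<alpha> \<in> carrier ?G" for \<alpha>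
    proof -
      have ep: "epow A (\<alpha> i) (p ^ (n - i + 1)) = (fst (\<alpha> i) ^ (p ^ (n - i + 1)), 0)" for i
        using epow_pp[OF cen[OF that] gfix[OF that] p(2), of i "n - i + 1"] by simp
      have e1: "(\<forall>i\<in>{1..n}. epow A (\<alpha> i) (p ^ (n - i + 1)) = (0, 0)) \<longleftrightarrow>
          (\<forall>i\<in>{1..n}. fst (\<alpha> i) ^ (p ^ (n - i + 1)) = 0)"
        by (simp only: ep prod.inject) simp
      have e2: "(\<forall>i\<ge>n + 1. \<alpha> i = (0, 0)) \<longleftrightarrow>
          (\<forall>i\<ge>n + 1. fst (\<alpha> i) = 0) \<and> (\<forall>i. n < i \<longrightarrow> snd (\<alpha> i) = 0)"
        by (auto simp: prod_eq_iff Suc_le_eq)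
      show ?thesis unfolding e1 e2 trunc_def by blast
    qed
    then show ?thesis unfolding Goddn_def by auto
  qed
  show ?thesis
  proof (rule subgroup_generic[where ri = ?ri])
    show "x \<otimes>\<^bsub>?G\<^esub> y \<in> carrier ?G" if "x \<in> carrier ?G" "y \<in> carrier ?G" for x y
      using closed[OF that] .
    show "x \<otimes>\<^bsub>?G\<^esub> y \<otimes>\<^bsub>?G\<^esub> z = x \<otimes>\<^bsub>?G\<^esub> (y \<otimes>\<^bsub>?G\<^esub> z)"
      if xyz: "x \<in> carrier ?G" "y \<in> carrier ?G" "z \<in> carrier ?G" for x y z
    proof -
      have as: "cmp p (cmp p (\<lambda>k. fst (x k)) (\<lambda>k. fst (y k))) g i =
                cmp p (\<lambda>k. fst (x k)) (cmp p (\<lambda>k. fst (y k)) g) i" for g i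
        by (rule cmp_assoc[OF p]) (use cen xyz in auto)
      show ?thesis
        unfolding mulf[OF closed[OF xyz(1,2)] xyz(3)] mulf[OF xyz(1) closed[OF xyz(2,3)]]
        unfolding mulf[OF xyz(1,2)] mulf[OF xyz(2,3)]
        by (simp add: as cmp_add_right add.assoc)
    qed
    show "\<one>\<^bsub>?G\<^esub> \<in> carrier ?G" by (rule onec)
    show "\<one>\<^bsub>?G\<^esub> \<otimes>\<^bsub>?G\<^esub> x = x" if "x \<in> carrier ?G" for x
      unfolding mulf[OF onec that] Fone Sone' by (simp add: cmp_one_left[OF p0])
    show "x \<otimes>\<^bsub>?G\<^esub> \<one>\<^bsub>?G\<^esub> = x" if "x \<in> carrier ?G" for x
      unfolding mulf[OF that onec] Fone Sone by (simp add: cmp_one_right cmp_zero_right)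
    show "?ri x \<in> carrier ?G" if "x \<in> carrier ?G" for x using ric[OF that] .
    show "x \<otimes>\<^bsub>?G\<^esub> ?ri x = \<one>\<^bsub>?G\<^esub>" if "x \<in> carrier ?G" for x
    proof -
      have x0: "fst (x 0) = 1" using that by (simp add: car)
      show ?thesis
        unfolding mulf[OF that ric[OF that]]
        by (simp add: cmp_sol[where a = "\<lambda>k. fst (x k)", OF x0] oneG fun_eq_iff)
    qed
    show "Goddn p n A \<subseteq> carrier ?G" unfolding Hc by auto
    show "\<one>\<^bsub>?G\<^esub> \<in> Goddn p n A" unfolding Hc
      using onec trunc_one[OF p0, of n] by (simp add: Fone Sone')
    show "x \<otimes>\<^bsub>?G\<^esub> y \<in> Goddn p n A" if "x \<in> Goddn p n A" "y \<in> Goddn p n A" for x y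
    proof -
      have x: "x \<in> carrier ?G" "trunc p n (\<lambda>k. fst (x k))" "\<And>i. n < i \<Longrightarrow> snd (x i) = 0"
        and y: "y \<in> carrier ?G" "trunc p n (\<lambda>k. fst (y k))" "\<And>i. n < i \<Longrightarrow> snd (y i) = 0"
        using that unfolding Hc by auto
      have "trunc p n (cmp p (\<lambda>k. fst (x k)) (\<lambda>k. fst (y k)))"
        by (rule cmp_trunc[OF p]) (use cen x y in auto)
      moreover have "cmp p (\<lambda>k. fst (x k)) (\<lambda>k. snd (y k)) i + snd (x i) = 0" if "n < i" for i
        using cmp_high_zero[OF x(2) p(1), of "\<lambda>k. snd (y k)"] y(3) x(3) that by simp
      ultimately show ?thesis unfolding Hc using closed[OF x(1) y(1)]
        by (simp add: mulf[OF x(1) y(1)])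
    qed
    show "?ri x \<in> Goddn p n A" if "x \<in> Goddn p n A" for x
    proof -
      have x: "x \<in> carrier ?G" "trunc p n (\<lambda>k. fst (x k))" "\<And>i. n < i \<Longrightarrow> snd (x i) = 0"
        using that unfolding Hc by auto
      have "trunc p n (sol p (\<lambda>k. fst (x k)) one_seq)"
        by (rule sol_trunc[OF p]) (use cen x in auto)
      moreover have "sol p (\<lambda>k. fst (x k)) (\<lambda>k. - snd (x k)) i = 0" if "n < i" for i
        by (rule sol_high_zero[OF x(2) p(1)]) (use x(3) that in auto)
      ultimately show ?thesis unfolding Hc using ric[OF x(1)] by simp
    qed
  qed
qed

theorem proposition3p5:
  fixes p n :: nat and A :: "int \<Rightarrow> 'a::ring_1 set"
  assumes "prime p"
    and "graded_comm_algebra_Fp p A"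
  shows "if p = 2 then subgroup (G2n n A) (G2 A)
         else subgroup (Goddn p n A) (Godd p A)"
proof (cases "p = 2")
  case True
  then have "graded_comm_algebra_Fp 2 A" using assms(2) by simp
  then show ?thesis using True G2_case[of A n] by simp
next
  case False
  then show ?thesis using Godd_case[OF assms(2,1), of n] by simp
qed

end
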